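(* Let $G$ be a finite group of order greater than $1$ and let $q$ be the smallest prime divisor of $|G|$. If ${\rm mf}_{pp}(G)<q$, then $G$ is cyclic.
   Context: All groups are finite. For a group $G$ and a positive integer $n$ dividing $|G|$, let $F_n(G)=\{g\in G\mid g^n=1\}$. By Frobenius' theorem $|F_n(G)|=f_n\cdot n$ for a positive integer $f_n$, called the Frobenius quotient of $G$ for $n$. ${\rm exp}(G)$ denotes the exponent of $G$. A prime-power divisor of ${\rm exp}(G)$ is a positive divisor $n$ of ${\rm exp}(G)$ of the form $n=p^k$ with $p$ prime and $k\geq 0$ (so $n=1$ is included). $\mathcal{F}_{pp}(G)=\{f_n\mid n \text{ is a prime-power divisor of } {\rm exp}(G)\}$ and ${\rm mf}_{pp}(G)$ is the maximum element of $\mathcal{F}_{pp}(G)$. *)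

theory Defs
  imports "HOL-Algebra.Algebra" "HOL-Computational_Algebra.Primes"
begin

definition group_exp :: "('a, 'b) monoid_scheme \<Rightarrow> nat" where
  "group_exp G = Lcm (group.ord G ` carrier G)"

definition sol_set :: "('a, 'b) monoid_scheme \<Rightarrow> nat \<Rightarrow> 'a set" where
  "sol_set G n = {g \<in> carrier G. g [^]\<^bsub>G\<^esub> n = \<one>\<^bsub>G\<^esub>}"

text \<open>Frobenius quotient f_n = |F_n(G)| / n (an integer when n divides |G|).\<close>
definition frob_quot :: "('a, 'b) monoid_scheme \<Rightarrow> nat \<Rightarrow> nat" where
  "frob_quot G n = card (sol_set G n) div n"

text \<open>Prime-power divisors of exp(G), including 1.\<close>
definition pp_divisors :: "('a, 'b) monoid_scheme \<Rightarrow> nat set" where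
  "pp_divisors G = {n. n dvd group_exp G \<and> (\<exists>p k. Factorial_Ring.prime (p::nat) \<and> n = p ^ k)}"

definition F_pp :: "('a, 'b) monoid_scheme \<Rightarrow> nat set" where
  "F_pp G = frob_quot G ` pp_divisors G"

definition mf_pp :: "('a, 'b) monoid_scheme \<Rightarrow> nat" where
  "mf_pp G = Max (F_pp G)"

end

theory Submission
  imports Defs "HOL-Number_Theory.Totient"
begin

lemma phi'_totient: "phi' n = totient n"
  unfolding phi'_def totient_def totatives_def
  by (rule arg_cong[where f=card]) auto

context group begin

lemma ord_pos_fin: "finite (carrier G) \<Longrightarrow> x \<in> carrier G \<Longrightarrow> ord x > 0"
  using ord_ge_1 by fastforce

lemma pow_ord_mult1: "x \<in> carrier G \<Longrightarrow> x [^] (ord x * (i::nat)) = \<one>"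
proof -
  assume x: "x \<in> carrier G"
  have "x [^] (ord x * i) = (x [^] ord x) [^] i" by (rule nat_pow_pow[OF x, symmetric])
  also have "\<dots> = \<one>" using x by (simp only: pow_ord_eq_1 nat_pow_one)
  finally show ?thesis .
qed

lemma pow_ord_mult2: "x \<in> carrier G \<Longrightarrow> x [^] ((i::nat) * ord x) = \<one>"
  using pow_ord_mult1[of x i] by (simp add: mult.commute)

lemma pow_ord_dvd: "x \<in> carrier G \<Longrightarrow> ord (x [^] (i::nat)) dvd ord x"
proof -
  assume x: "x \<in> carrier G"
  have "(x [^] i) [^] ord x = \<one>" using x pow_ord_mult2 by (simp add: nat_pow_pow)
  then show ?thesis using pow_eq_id[of "x [^] i"] x by simp
qed

lemma conj_pow: "g \<in> carrier G \<Longrightarrow> z \<in> carrier G \<Longrightarrow>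
   (g \<otimes> z \<otimes> inv g) [^] (n::nat) = g \<otimes> z [^] n \<otimes> inv g"
proof (induction n)
  case 0 then show ?case by simp
next
  case (Suc n)
  have "(g \<otimes> z \<otimes> inv g) [^] Suc n = (g \<otimes> z [^] n \<otimes> inv g) \<otimes> (g \<otimes> z \<otimes> inv g)"
    using Suc by simp
  also have "\<dots> = g \<otimes> (z [^] n \<otimes> z) \<otimes> inv g"
    using Suc.prems by (simp add: m_assoc) (simp add: m_assoc[symmetric])
  finally show ?case using Suc.prems by (simp add: nat_pow_Suc)
qed

lemma ord_conj: "g \<in> carrier G \<Longrightarrow> z \<in> carrier G \<Longrightarrow> ord (g \<otimes> z \<otimes> inv g) = ord z"
proof -
  assume g: "g \<in> carrier G" and z: "z \<in> carrier G"
  have "\<And>n. (g \<otimes> z \<otimes> inv g) [^] (n::nat) = \<one> \<longleftrightarrow> z [^] n = \<one>"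
  proof -
    fix n :: nat
    have "g \<otimes> z [^] n \<otimes> inv g = \<one> \<longleftrightarrow> z [^] n = \<one>"
      using g z by (simp add: inv_solve_right')
    then show "(g \<otimes> z \<otimes> inv g) [^] (n::nat) = \<one> \<longleftrightarrow> z [^] n = \<one>"
      using conj_pow[OF g z] by simp
  qed
  then have "\<forall>n. (g \<otimes> z \<otimes> inv g) [^] (n::nat) = \<one> \<longleftrightarrow> ord z dvd n"
    using pow_eq_id[OF z] by simp
  then show ?thesis using ord_unique[of "g \<otimes> z \<otimes> inv g" "ord z"] g z by simp
qed

end

context group begin

lemma cyclic_if_gen_carrier:
  assumes "a \<in> carrier G" "generate G {a} = carrier G"
  shows "cyclic_group G"
proof -
  have "carrier G = range (\<lambda>n::int. a [^] n)"
    using assms(2) generate_pow[OF assms(1)] by blast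
  thus ?thesis using cyclic_group assms(1) by blast
qed

lemma cyclic_from_counts:
  assumes fin: "finite (carrier G)"
  and le: "\<And>d. d dvd order G \<Longrightarrow> card {a\<in>carrier G. ord a = d} \<le> phi' d"
  shows "cyclic_group G"
proof -
  let ?N = "\<lambda>d. card {a\<in>carrier G. ord a = d}"
  have pos: "0 < order G" using fin order_gt_0_iff_finite by blast
  have finD: "finite {d. d dvd order G}" using pos by simp
  have "(\<Sum>d | d dvd order G. ?N d) = card (\<Union>d\<in>{d. d dvd order G}. {a\<in>carrier G. ord a = d})"
    using finD fin by (subst card_UN_disjoint) auto
  also have "(\<Union>d\<in>{d. d dvd order G}. {a\<in>carrier G. ord a = d}) = carrier G"
    using ord_dvd_group_order by auto
  finally have sumN: "(\<Sum>d | d dvd order G. ?N d) = order G" by (simp add: order_def)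
  have sumphi: "(\<Sum>d | d dvd order G. phi' d) = order G"
    using sum_phi'_factors[OF pos] by simp
  have "?N (order G) > 0"
  proof (rule ccontr)
    assume "\<not> ?N (order G) > 0"
    hence "?N (order G) < phi' (order G)" using phi'_nonzero[OF pos] by simp
    hence ex: "\<exists>d\<in>{d. d dvd order G}. ?N d < phi' d" by (meson dvd_refl mem_Collect_eq)
    have all: "\<forall>d\<in>{d. d dvd order G}. ?N d \<le> phi' d" using le by auto
    have "(\<Sum>d | d dvd order G. ?N d) < (\<Sum>d | d dvd order G. phi' d)"
      using sum_strict_mono_ex1[OF finD all ex] .
    thus False using sumN sumphi by simp
  qed
  then have "{a\<in>carrier G. ord a = order G} \<noteq> {}" by (metis card.empty less_irrefl)
  then obtain a where a: "a \<in> carrier G" "ord a = order G" by blast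
  have "generate G {a} \<subseteq> carrier G"
    using a generate_is_subgroup subgroup.subset by blast
  moreover have "card (generate G {a}) = card (carrier G)"
    using generate_pow_card[OF a(1)] a(2) by (simp add: order_def)
  ultimately have "generate G {a} = carrier G"
    using fin by (simp add: card_subset_eq)
  thus ?thesis using cyclic_if_gen_carrier a(1) by blast
qed

end

context group begin

lemma pow_decomp:
  assumes g: "g \<in> carrier G" and eq: "m * x = n * y + (1::nat)"
  shows "g = inv ((g [^] n) [^] y) \<otimes> (g [^] m) [^] x"
proof -
  have "(g [^] m) [^] x = (g [^] n) [^] y \<otimes> g"
    using g eq by (simp add: nat_pow_pow nat_pow_mult[symmetric])
  thus ?thesis using g
    by (metis inv_closed l_inv l_one m_assoc nat_pow_closed)
qed

lemma card_ord_mult: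
  assumes fin: "finite (carrier G)" and cop: "coprime m n" and m: "m > 0" and n: "n > 0"
  shows "card {g\<in>carrier G. ord g = m*n} \<le> card {g\<in>carrier G. ord g = m} * card {g\<in>carrier G. ord g = n}"
proof -
  let ?A = "{g\<in>carrier G. ord g = m}" and ?B = "{g\<in>carrier G. ord g = n}"
  let ?f = "\<lambda>g. (g [^] n, g [^] m)"
  obtain x y where xy: "m * x = n * y + gcd m n" using bezout_nat[of m n] m by auto
  hence xy: "m * x = n * y + 1" using cop by simp
  have maps: "?f ` {g\<in>carrier G. ord g = m*n} \<subseteq> ?A \<times> ?B"
  proof
    fix z assume "z \<in> ?f ` {g\<in>carrier G. ord g = m*n}"
    then obtain g where g: "g \<in> carrier G" "ord g = m*n" and z: "z = ?f g" by auto
    have "ord (g [^] n) = m" using ord_pow[OF g(1), of n] g(2) n by simp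
    moreover have "ord (g [^] m) = n" using ord_pow[OF g(1), of m] g(2) m by simp
    ultimately show "z \<in> ?A \<times> ?B" using g z by auto
  qed
  have inj: "inj_on ?f {g\<in>carrier G. ord g = m*n}"
  proof (rule inj_onI)
    fix g h assume g: "g \<in> {g\<in>carrier G. ord g = m*n}" and h: "h \<in> {g\<in>carrier G. ord g = m*n}"
      and e: "?f g = ?f h"
    have "g = inv ((g [^] n) [^] y) \<otimes> (g [^] m) [^] x" using pow_decomp g xy by blast
    also have "\<dots> = inv ((h [^] n) [^] y) \<otimes> (h [^] m) [^] x" using e by simp
    also have "\<dots> = h" using pow_decomp[symmetric] h xy by blast
    finally show "g = h" .
  qed
  have "card {g\<in>carrier G. ord g = m*n} \<le> card (?A \<times> ?B)"
    using card_inj_on_le[OF inj maps] fin by simp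
  thus ?thesis by (simp add: card_cartesian_product)
qed

end

context group begin

lemma gen_fin: "finite (carrier G) \<Longrightarrow> a \<in> carrier G \<Longrightarrow> generate G {a} = {a [^] (k::nat) | k. True}"
  using generate_pow_on_finite_carrier[of a] by auto

lemma pow_mod_ord: "a \<in> carrier G \<Longrightarrow> a [^] (k::nat) = a [^] (k mod ord a)"
  by (metis (no_types, lifting) div_mult_mod_eq mult.commute nat_pow_mult nat_pow_one nat_pow_pow
      nat_pow_closed pow_ord_eq_1 l_one)

lemma card_gen_ord:
  assumes fin: "finite (carrier G)" and a: "a \<in> carrier G"
  shows "card {y \<in> generate G {a}. ord y = ord a} = phi' (ord a)"
proof -
  let ?d = "ord a"
  have d: "?d > 0" using ord_pos_fin fin a by blast
  have eq: "{y \<in> generate G {a}. ord y = ord a} = (\<lambda>n. a [^] n) ` {n\<in>{1..?d}. ord (a [^] n) = ?d}"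
  proof
    show "{y \<in> generate G {a}. ord y = ord a} \<subseteq> (\<lambda>n. a [^] n) ` {n\<in>{1..?d}. ord (a [^] n) = ?d}"
    proof
      fix y assume y: "y \<in> {y \<in> generate G {a}. ord y = ord a}"
      then obtain k :: nat where k: "y = a [^] k" using gen_fin[OF fin a] by auto
      define n where "n = (if k mod ?d = 0 then ?d else k mod ?d)"
      have "a [^] k = a [^] n"
        using pow_mod_ord[OF a, of k] pow_mod_ord[OF a, of ?d] d unfolding n_def by auto
      moreover have "n \<in> {1..?d}" using d unfolding n_def by auto
      ultimately show "y \<in> (\<lambda>n. a [^] n) ` {n\<in>{1..?d}. ord (a [^] n) = ?d}" using y k by auto
    qed
    show "(\<lambda>n. a [^] n) ` {n\<in>{1..?d}. ord (a [^] n) = ?d} \<subseteq> {y \<in> generate G {a}. ord y = ord a}"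
      using gen_fin[OF fin a] by auto
  qed
  have inj: "inj_on (\<lambda>n. a [^] n) {n\<in>{1..?d}. ord (a [^] n) = ?d}"
    using ord_inj'[OF a] by (rule inj_on_subset) auto
  have "card {y \<in> generate G {a}. ord y = ord a} = card {n\<in>{1..?d}. ord (a [^] n) = ?d}"
    using eq card_image[OF inj] by simp
  also have "{n\<in>{1..?d}. ord (a [^] n) = ?d} = {n\<in>{1..?d}. coprime n ?d}"
    using pow_ord_eq_ord_iff[OF fin a] by auto
  also have "card \<dots> = phi' ?d" unfolding phi'_def
    by (rule arg_cong[where f=card]) auto
  finally show ?thesis .
qed

lemma card_gen_sol:
  assumes fin: "finite (carrier G)" and a: "a \<in> carrier G" and dd: "d dvd ord a"
  shows "card {y \<in> generate G {a}. y [^] d = \<one>} \<le> d"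
proof -
  let ?N = "ord a"
  have N: "?N > 0" using ord_pos_fin fin a by blast
  obtain s where s: "?N = d * s" using dd by blast
  have dpos: "d > 0" "s > 0" using N s by auto
  have "{y \<in> generate G {a}. y [^] d = \<one>} \<subseteq> (\<lambda>j. a [^] (s*j)) ` {..<d}"
  proof
    fix y assume y: "y \<in> {y \<in> generate G {a}. y [^] d = \<one>}"
    then obtain k :: nat where k: "y = a [^] k" using gen_fin[OF fin a] by auto
    define i where "i = k mod ?N"
    have yi: "y = a [^] i" using k pow_mod_ord[OF a] i_def by simp
    have iN: "i < ?N" using N i_def by simp
    have "a [^] (i * d) = \<one>" using y yi a by (simp add: nat_pow_pow)
    hence "?N dvd i * d" using pow_eq_id a by blast
    hence "d * s dvd d * i" using s by (simp add: mult.commute)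
    hence "s dvd i" using dpos by simp
    then obtain j where j: "i = s * j" by blast
    have "j < d" using iN j s dpos by (metis mult.commute mult_less_cancel1)
    thus "y \<in> (\<lambda>j. a [^] (s*j)) ` {..<d}" using yi j by auto
  qed
  hence "card {y \<in> generate G {a}. y [^] d = \<one>} \<le> card ((\<lambda>j. a [^] (s*j)) ` {..<d})"
    by (rule card_mono[rotated]) simp
  also have "\<dots> \<le> d" using card_image_le[of "{..<d}"] by simp
  finally show ?thesis .
qed

lemma card_ord_eq_phi:
  assumes fin: "finite (carrier G)" and a: "a \<in> carrier G" and le: "card {y\<in>carrier G. y [^] ord a = \<one>} \<le> ord a"
  shows "card {y\<in>carrier G. ord y = ord a} = phi' (ord a)"
proof -
  have sub: "generate G {a} \<subseteq> {y\<in>carrier G. y [^] ord a = \<one>}"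
  proof
    fix y assume "y \<in> generate G {a}"
    then obtain k :: nat where k: "y = a [^] k" using gen_fin[OF fin a] by auto
    have "y [^] ord a = (a [^] ord a) [^] k" using k a by (metis nat_pow_pow mult.commute)
    thus "y \<in> {y\<in>carrier G. y [^] ord a = \<one>}" using a k
      by (metis (mono_tags, lifting) mem_Collect_eq nat_pow_closed nat_pow_one pow_ord_eq_1)
  qed
  have cg: "card (generate G {a}) = ord a" using generate_pow_card[OF a] by simp
  have finS: "finite {y\<in>carrier G. y [^] ord a = \<one>}" using fin by simp
  have eq: "generate G {a} = {y\<in>carrier G. y [^] ord a = \<one>}"
    by (rule card_seteq[OF finS sub]) (use le cg in simp)
  have "{y\<in>carrier G. ord y = ord a} \<subseteq> generate G {a}"
  proof
    fix y assume "y \<in> {y\<in>carrier G. ord y = ord a}"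
    hence "y \<in> {y\<in>carrier G. y [^] ord a = \<one>}" by (metis (mono_tags, lifting) mem_Collect_eq pow_ord_eq_1)
    thus "y \<in> generate G {a}" using eq by simp
  qed
  hence "{y\<in>carrier G. ord y = ord a} = {y \<in> generate G {a}. ord y = ord a}"
    using sub by blast
  thus ?thesis using card_gen_ord[OF fin a] by simp
qed

end

context group begin

lemma normalizing_pelem_in:
  assumes fin: "finite (carrier G)" and p: "Factorial_Ring.prime (p::nat)"
    and Q: "subgroup Q G" and cardQ: "card Q = p ^ a"
    and ordG: "order G = p ^ a * m" and pm: "\<not> p dvd m"
    and y: "y \<in> carrier G" and yk: "y [^] (p ^ k) = \<one>"
    and norm: "y <# Q #> inv y = Q"
  shows "y \<in> Q"
proof -
  have Qc: "Q \<subseteq> carrier G" using Q subgroup.subset by blast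
  define N where "N = normalizer G Q"
  have N: "subgroup N G" unfolding N_def using normalizer_imp_subgroup[OF Qc] .
  have yN: "y \<in> N" unfolding N_def normalizer_def stabilizer_def
    using y norm Qc by auto
  define GN where "GN = G\<lparr>carrier := N\<rparr>"
  have nQ: "normal Q GN" unfolding GN_def N_def using subgroup_in_normalizer[OF Q] .
  have gGN: "group GN" unfolding GN_def using subgroup_imp_group[OF N] .
  define F where "F = GN Mod Q"
  have gF: "group F" unfolding F_def using normal.factorgroup_is_group[OF nQ] .
  have hom: "(\<lambda>g. Q #>\<^bsub>GN\<^esub> g) \<in> hom GN F"
    unfolding F_def using normal.r_coset_hom_Mod[OF nQ] .
  have rc: "\<And>g. Q #>\<^bsub>GN\<^esub> g = Q #> g" unfolding GN_def r_coset_def by simp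
  have ghom: "group_hom GN F (\<lambda>g. Q #>\<^bsub>GN\<^esub> g)"
    using hom gGN gF by (simp add: group_hom_def group_hom_axioms_def)
  have yGN: "y \<in> carrier GN" unfolding GN_def using yN by simp
  have hyc: "Q #> y \<in> carrier F"
    using hom yGN rc unfolding hom_def by (metis (no_types, lifting) Pi_iff mem_Collect_eq)
  have "(Q #> y) [^]\<^bsub>F\<^esub> (p ^ k) = Q #>\<^bsub>GN\<^esub> (y [^]\<^bsub>GN\<^esub> (p ^ k))"
    using group_hom.hom_nat_pow[OF ghom yGN] rc by simp
  also have "y [^]\<^bsub>GN\<^esub> (p ^ k) = \<one>\<^bsub>GN\<^esub>"
    using yk nat_pow_consistent[of y "p^k" N] unfolding GN_def by simp
  also have "Q #>\<^bsub>GN\<^esub> \<one>\<^bsub>GN\<^esub> = \<one>\<^bsub>F\<^esub>"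
    using group_hom.hom_one[OF ghom] .
  finally have pw: "(Q #> y) [^]\<^bsub>F\<^esub> (p ^ k) = \<one>\<^bsub>F\<^esub>" .
  have d1: "group.ord F (Q #> y) dvd p ^ k"
    using group.pow_eq_id[OF gF hyc] pw by blast
  have finN: "finite N" using fin N subgroup.subset finite_subset by metis
  have lagN: "card (rcosets\<^bsub>GN\<^esub> Q) * card Q = card N"
    using group.lagrange[OF gGN normal.axioms(1)[OF nQ]] unfolding GN_def order_def by simp
  have ordF: "order F = card (rcosets\<^bsub>GN\<^esub> Q)" unfolding F_def order_def FactGroup_def by simp
  have lagG: "card (rcosets N) * card N = order G" using lagrange[OF N] .
  have "order F * p ^ a dvd p ^ a * m"
    using lagN lagG ordF cardQ ordG by (metis dvd_triv_right)
  hence dm: "order F dvd m" using p by (simp add: mult.commute)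
  have finF: "finite (carrier F)"
    unfolding F_def FactGroup_def RCOSETS_def using finN unfolding GN_def by simp
  have d2: "group.ord F (Q #> y) dvd order F"
    using group.ord_dvd_group_order[OF gF hyc] .
  have "coprime (p ^ k) m" using prime_imp_coprime[OF p pm] by simp
  moreover have "group.ord F (Q #> y) dvd gcd (p ^ k) m"
    using d1 d2 dm by (meson dvd_trans gcd_greatest)
  ultimately have "group.ord F (Q #> y) = 1"
    by (simp add: coprime_iff_gcd_eq_1)
  hence "Q #> y = \<one>\<^bsub>F\<^esub>" using group.ord_eq_1[OF gF hyc] by simp
  hence "Q #> y = Q" unfolding F_def by simp
  moreover have "y \<in> Q #> y" unfolding r_coset_def using y Q subgroup.one_closed by fastforce
  ultimately show ?thesis by simp
qed

end

context group begin

lemma conj_set: "g <# H #> inv g = (\<lambda>h. g \<otimes> h \<otimes> inv g) ` H"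
  unfolding l_coset_def r_coset_def by auto

lemma conj_gen:
  assumes fin: "finite (carrier G)" and g: "g \<in> carrier G" and z: "z \<in> carrier G"
  shows "g <# generate G {z} #> inv g = generate G {g \<otimes> z \<otimes> inv g}"
proof -
  have gz: "g \<otimes> z \<otimes> inv g \<in> carrier G" using g z by simp
  show ?thesis
    unfolding conj_set gen_fin[OF fin z] gen_fin[OF fin gz]
    using conj_pow[OF g z] by auto
qed

lemma gen_sub_eq:
  assumes fin: "finite (carrier G)" and z: "z \<in> carrier G" and Q: "subgroup Q G"
    and zQ: "z \<in> Q" and c: "card Q = ord z"
  shows "Q = generate G {z}"
proof -
  have "generate G {z} \<subseteq> Q" using generate_subgroup_incl[OF _ Q] zQ by blast
  moreover have "finite Q" using fin Q subgroup.subset finite_subset by metis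
  ultimately show ?thesis using generate_pow_card[OF z] c card_subset_eq by metis
qed

lemma gen_subgroup: "z \<in> carrier G \<Longrightarrow> subgroup (generate G {z}) G"
  using generate_is_subgroup by blast

lemma count_top_order:
  assumes fin: "finite (carrier G)" and dpos: "d > 0"
  defines "C \<equiv> {generate G {z} | z. z \<in> carrier G \<and> ord z = d}"
  shows "card {z\<in>carrier G. ord z = d} = card C * phi' d"
proof -
  have Csub: "C \<subseteq> Pow (carrier G)" unfolding C_def using gen_subgroup subgroup.subset by blast
  have finC: "finite C" using Csub fin finite_subset by (metis finite_Pow_iff)
  have U: "{z\<in>carrier G. ord z = d} = (\<Union>Q\<in>C. {z\<in>Q. ord z = d})"
  proof
    show "{z\<in>carrier G. ord z = d} \<subseteq> (\<Union>Q\<in>C. {z\<in>Q. ord z = d})"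
    proof
      fix z assume z: "z \<in> {z\<in>carrier G. ord z = d}"
      hence "generate G {z} \<in> C" unfolding C_def by (intro CollectI exI[of _ z]) simp
      moreover have "z \<in> generate G {z}" by (rule generate.incl) simp
      ultimately show "z \<in> (\<Union>Q\<in>C. {z\<in>Q. ord z = d})" using z by blast
    qed
    show "(\<Union>Q\<in>C. {z\<in>Q. ord z = d}) \<subseteq> {z\<in>carrier G. ord z = d}"
      using Csub by blast
  qed
  have disj: "\<And>Q1 Q2. Q1 \<in> C \<Longrightarrow> Q2 \<in> C \<Longrightarrow> Q1 \<noteq> Q2 \<Longrightarrow>
       {z\<in>Q1. ord z = d} \<inter> {z\<in>Q2. ord z = d} = {}"
  proof (rule ccontr)
    fix Q1 Q2 assume Q1: "Q1 \<in> C" and Q2: "Q2 \<in> C" and ne: "Q1 \<noteq> Q2"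
      and "{z\<in>Q1. ord z = d} \<inter> {z\<in>Q2. ord z = d} \<noteq> {}"
    then obtain z where zz: "z \<in> Q1" "z \<in> Q2" "ord z = d" by blast
    obtain z1 where z1: "z1 \<in> carrier G" "ord z1 = d" "Q1 = generate G {z1}" using Q1 C_def by blast
    obtain z2 where z2: "z2 \<in> carrier G" "ord z2 = d" "Q2 = generate G {z2}" using Q2 C_def by blast
    have zc: "z \<in> carrier G" using zz z1 gen_subgroup subgroup.subset by blast
    have "Q1 = generate G {z}"
      using gen_sub_eq[OF fin zc gen_subgroup[OF z1(1)]] zz z1 generate_pow_card by metis
    moreover have "Q2 = generate G {z}"
      using gen_sub_eq[OF fin zc gen_subgroup[OF z2(1)]] zz z2 generate_pow_card by metis
    ultimately show False using ne by simp
  qed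
  have each: "\<And>Q. Q \<in> C \<Longrightarrow> card {z\<in>Q. ord z = d} = phi' d"
  proof -
    fix Q assume "Q \<in> C"
    then obtain z1 where z1: "z1 \<in> carrier G" "ord z1 = d" "Q = generate G {z1}" using C_def by blast
    show "card {z\<in>Q. ord z = d} = phi' d" using card_gen_ord[OF fin z1(1)] z1 by simp
  qed
  have finQ: "\<And>Q. Q \<in> C \<Longrightarrow> finite {z\<in>Q. ord z = d}"
  proof -
    fix Q assume "Q \<in> C"
    hence "{z\<in>Q. ord z = d} \<subseteq> carrier G" using Csub by auto
    thus "finite {z\<in>Q. ord z = d}" using fin by (rule finite_subset)
  qed
  have "card {z\<in>carrier G. ord z = d} = (\<Sum>Q\<in>C. card {z\<in>Q. ord z = d})"
    unfolding U by (rule card_UN_disjoint[OF finC]) (simp_all add: finQ disj)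
  also have "\<dots> = card C * phi' d" using each by simp
  finally show ?thesis .
qed

end

context group begin

lemma card_C_mod:
  assumes fin: "finite (carrier G)" and p: "Factorial_Ring.prime (p::nat)"
    and ordG: "order G = p ^ a * m" and pm: "\<not> p dvd m"
    and x: "x \<in> carrier G" and ox: "ord x = p ^ a"
  defines "C \<equiv> {generate G {z} | z. z \<in> carrier G \<and> ord z = p ^ a}"
  shows "p dvd card C - 1"
proof -
  define P0 where "P0 = generate G {x}"
  have P0C: "P0 \<in> C" unfolding P0_def C_def using x ox by blast
  have P0s: "subgroup P0 G" unfolding P0_def using gen_subgroup[OF x] .
  have cP0: "card P0 = p ^ a" unfolding P0_def using generate_pow_card[OF x] ox by simp
  have Csub: "C \<subseteq> Pow (carrier G)" unfolding C_def using gen_subgroup subgroup.subset by blast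
  have finC: "finite C" using Csub fin finite_subset by (metis finite_Pow_iff)
  have Cprops: "\<And>Q. Q \<in> C \<Longrightarrow> subgroup Q G \<and> card Q = p ^ a"
    unfolding C_def using gen_subgroup generate_pow_card by fastforce
  define E where "E = {H. H \<subseteq> carrier G}"
  define \<phi> where "\<phi> = (\<lambda>g. \<lambda>H \<in> E. g <# H #> inv g)"
  define HP where "HP = G\<lparr>carrier := P0\<rparr>"
  have act: "group_action HP E \<phi>"
    unfolding HP_def \<phi>_def E_def
    using group_action.induced_action[OF action_by_conjugation_on_power_set P0s] .
  have orbit_eq: "\<And>Q. orbit HP \<phi> Q = {\<phi> g Q | g. g \<in> P0}"
    unfolding orbit_def HP_def by simp
  have P0c: "P0 \<subseteq> carrier G" using P0s subgroup.subset by blast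
  have orbC: "\<And>Q. Q \<in> C \<Longrightarrow> orbit HP \<phi> Q \<subseteq> C"
  proof
    fix Q R assume Q: "Q \<in> C" and R: "R \<in> orbit HP \<phi> Q"
    obtain g where g: "g \<in> P0" "R = \<phi> g Q" using R orbit_eq by blast
    obtain z where z: "z \<in> carrier G" "ord z = p ^ a" "Q = generate G {z}" using Q C_def by blast
    have gc: "g \<in> carrier G" using g P0c by blast
    have "R = g <# Q #> inv g" using g Q Csub unfolding \<phi>_def E_def by auto
    also have "\<dots> = generate G {g \<otimes> z \<otimes> inv g}" using conj_gen[OF fin gc z(1)] z by simp
    finally show "R \<in> C" unfolding C_def using ord_conj[OF gc z(1)] z gc by auto
  qed
  have inE: "\<And>Q. Q \<in> C \<Longrightarrow> Q \<in> E" using Csub E_def by blast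
  have refl: "\<And>Q. Q \<in> C \<Longrightarrow> Q \<in> orbit HP \<phi> Q"
    using group_action.orbit_refl[OF act] inE by blast
  have orbits_in: "\<And>Q. Q \<in> C \<Longrightarrow> orbit HP \<phi> Q \<in> orbits HP E \<phi>"
    unfolding orbits_def using inE by blast
  have disj: "\<And>Q1 Q2. Q1 \<in> C \<Longrightarrow> Q2 \<in> C \<Longrightarrow>
      orbit HP \<phi> Q1 = orbit HP \<phi> Q2 \<or> orbit HP \<phi> Q1 \<inter> orbit HP \<phi> Q2 = {}"
    using group_action.disjoint_union[OF act orbits_in orbits_in] by blast
  have orbP0: "orbit HP \<phi> P0 = {P0}"
  proof -
    have "\<And>g. g \<in> P0 \<Longrightarrow> \<phi> g P0 = P0"
    proof -
      fix g assume g: "g \<in> P0"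
      have gc: "g \<in> carrier G" using g P0c by blast
      have "g <# P0 = P0" using coset_join3[OF gc P0s g] .
      moreover have "P0 #> inv g = P0"
        using coset_join2[OF inv_closed[OF gc] P0s] subgroup.m_inv_closed[OF P0s g] by simp
      ultimately show "\<phi> g P0 = P0" unfolding \<phi>_def E_def using P0c by simp
    qed
    thus ?thesis using orbit_eq[of P0] subgroup.one_closed[OF P0s] by blast
  qed
  have orbcard: "\<And>Q. Q \<in> C \<Longrightarrow> card (orbit HP \<phi> Q) dvd p ^ a"
  proof -
    fix Q assume "Q \<in> C"
    have "card (orbit HP \<phi> Q) * card (stabilizer HP \<phi> Q) = order HP"
      using group_action.orbit_stabilizer_theorem[OF act inE[OF \<open>Q \<in> C\<close>]] .
    moreover have "order HP = p ^ a" unfolding HP_def order_def using cP0 by simp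
    ultimately show "card (orbit HP \<phi> Q) dvd p ^ a" by (metis dvd_triv_left)
  qed
  have orb_p: "\<And>Q. Q \<in> C - {P0} \<Longrightarrow> p dvd card (orbit HP \<phi> Q)"
  proof -
    fix Q assume QC: "Q \<in> C - {P0}"
    obtain j where j: "j \<le> a" "card (orbit HP \<phi> Q) = p ^ j"
      using orbcard[of Q] QC divides_primepow_nat[OF p] by blast
    have "j \<noteq> 0"
    proof
      assume "j = 0"
      hence c1: "card (orbit HP \<phi> Q) = 1" using j by simp
      have "orbit HP \<phi> Q = {Q}" using c1 refl QC by (metis DiffD1 card_1_singletonE singletonD)
      moreover have "\<phi> x Q \<in> orbit HP \<phi> Q"
        using orbit_eq[of Q] generate.incl[of x "{x}" G] unfolding P0_def by blast
      ultimately have "\<phi> x Q = Q" by blast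
      hence xn: "x <# Q #> inv x = Q" unfolding \<phi>_def using inE QC by simp
      have Qs: "subgroup Q G" and cQ: "card Q = p ^ a" using Cprops QC by auto
      have "x [^] (p ^ a) = \<one>" using ox x pow_ord_eq_1 by metis
      hence "x \<in> Q" using normalizing_pelem_in[OF fin p Qs cQ ordG pm x _ xn] by blast
      hence "Q = P0" unfolding P0_def using gen_sub_eq[OF fin x Qs] cQ ox by simp
      thus False using QC by simp
    qed
    thus "p dvd card (orbit HP \<phi> Q)" using j by simp
  qed
  define OS where "OS = (\<lambda>Q. orbit HP \<phi> Q) ` (C - {P0})"
  have UOS: "\<Union>OS = C - {P0}"
  proof
    show "\<Union>OS \<subseteq> C - {P0}"
    proof
      fix R assume "R \<in> \<Union>OS"
      then obtain Q where Q: "Q \<in> C - {P0}" "R \<in> orbit HP \<phi> Q" unfolding OS_def by blast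
      have "R \<in> C" using orbC Q by blast
      moreover have "R \<noteq> P0"
      proof
        assume "R = P0"
        hence "orbit HP \<phi> Q \<inter> orbit HP \<phi> P0 \<noteq> {}" using Q refl P0C by blast
        hence "orbit HP \<phi> Q = {P0}" using disj[of Q P0] Q P0C orbP0 by auto
        thus False using refl Q by blast
      qed
      ultimately show "R \<in> C - {P0}" by blast
    qed
    show "C - {P0} \<subseteq> \<Union>OS" unfolding OS_def using refl by blast
  qed
  have pw: "pairwise disjnt OS"
    unfolding OS_def pairwise_def disjnt_def using disj by auto
  have finO: "\<And>A. A \<in> OS \<Longrightarrow> finite A"
  proof -
    fix A assume "A \<in> OS"
    then obtain Q where "Q \<in> C - {P0}" "A = orbit HP \<phi> Q" unfolding OS_def by blast
    hence "A \<subseteq> C" using orbC by blast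
    thus "finite A" using finC by (rule finite_subset)
  qed
  have "card (C - {P0}) = sum card OS" using card_Union_disjoint[OF pw finO] UOS by simp
  moreover have "p dvd sum card OS" using orb_p unfolding OS_def by (auto intro!: dvd_sum)
  ultimately have "p dvd card (C - {P0})" by simp
  thus ?thesis using P0C finC by simp
qed

end

lemma pp_dvd_lcm:
  fixes p :: nat
  assumes p: "Factorial_Ring.prime p" and x: "x \<noteq> 0" and y: "y \<noteq> 0" and d: "p ^ a dvd lcm x y"
  shows "p ^ a dvd x \<or> p ^ a dvd y"
proof -
  have np: "\<not> is_unit p" using prime_gt_1_nat[OF p] by simp
  have l: "lcm x y \<noteq> 0" using x y by simp
  have "a \<le> multiplicity p (lcm x y)" using power_dvd_iff_le_multiplicity[OF l np] d by simp
  hence "a \<le> multiplicity p x \<or> a \<le> multiplicity p y" using multiplicity_lcm[OF x y p] by linarith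
  thus ?thesis using power_dvd_iff_le_multiplicity[OF x np] power_dvd_iff_le_multiplicity[OF y np]
    by blast
qed

lemma pp_dvd_Lcm:
  fixes p :: nat
  assumes fin: "finite A" and p: "Factorial_Ring.prime p" and a: "a > 0" and z: "0 \<notin> A"
  shows "p ^ a dvd Lcm A \<Longrightarrow> \<exists>x\<in>A. p ^ a dvd x"
  using fin z
proof (induction A rule: finite_induct)
  case empty
  then have "p ^ a dvd 1" by simp
  hence "p ^ a = 1" by simp
  thus ?case using a p by (simp add: prime_gt_1_nat)
next
  case (insert x A)
  have x0: "x \<noteq> 0" using insert.prems by auto
  have L0: "Lcm A \<noteq> 0" using insert.prems insert.hyps(1) Lcm_0_iff by auto
  have "p ^ a dvd lcm x (Lcm A)" using insert.prems by simp
  hence "p ^ a dvd x \<or> p ^ a dvd Lcm A" using pp_dvd_lcm[OF p x0 L0] by blast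
  thus ?case using insert.IH insert.prems by auto
qed

context group begin

lemma core:
  assumes fin: "finite (carrier G)" and p: "Factorial_Ring.prime (p::nat)"
    and ordG: "order G = p ^ a * m" and pm: "\<not> p dvd m" and apos: "a > 0"
    and x: "x \<in> carrier G" and ox: "ord x = p ^ a"
    and bound: "card {y\<in>carrier G. y [^] (p ^ a) = \<one>} < p * p ^ a"
  shows "\<And>y. y \<in> carrier G \<Longrightarrow> y [^] (p ^ a) = \<one> \<Longrightarrow> y \<in> generate G {x}"
proof -
  define C where "C = {generate G {z} | z. z \<in> carrier G \<and> ord z = p ^ a}"
  define P0 where "P0 = generate G {x}"
  have P0C: "P0 \<in> C" unfolding P0_def C_def using x ox by blast
  have P0s: "subgroup P0 G" unfolding P0_def using gen_subgroup[OF x] .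
  have cP0: "card P0 = p ^ a" unfolding P0_def using generate_pow_card[OF x] ox by simp
  have Csub: "C \<subseteq> Pow (carrier G)" unfolding C_def using gen_subgroup subgroup.subset by blast
  have finC: "finite C" using Csub fin finite_subset by (metis finite_Pow_iff)
  have p2: "p \<ge> 2" using prime_ge_2_nat[OF p] .
  define u where "u = p ^ (a - 1)"
  have pa: "p ^ a = p * u"
  proof -
    have "a = Suc (a - 1)" using apos by simp
    hence "p ^ a = p ^ Suc (a - 1)" by (rule arg_cong)
    thus ?thesis unfolding u_def by (simp only: power_Suc)
  qed
  have upos: "u > 0" unfolding u_def using p2 by simp
  have phi: "phi' (p ^ a) = u * (p - 1)"
    unfolding u_def phi'_totient using totient_prime_power[OF p apos] .
  define Ot where "Ot = {z\<in>carrier G. ord z = p ^ a}"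
  have cO: "card Ot = card C * phi' (p ^ a)"
    unfolding Ot_def C_def using count_top_order[OF fin, of "p ^ a"] p2 by simp
  define S where "S = {y\<in>carrier G. y [^] (p ^ a) = \<one>}"
  have finS: "finite S" unfolding S_def using fin by simp
  have OS: "Ot \<subseteq> S"
  proof
    fix z assume "z \<in> Ot"
    hence z: "z \<in> carrier G" "ord z = p ^ a" unfolding Ot_def by auto
    have "z [^] (p ^ a) = \<one>" using pow_ord_eq_1[OF z(1)] z(2) by simp
    thus "z \<in> S" unfolding S_def using z by simp
  qed
  have P0S: "P0 \<subseteq> S"
  proof
    fix y assume "y \<in> P0"
    then obtain k :: nat where k: "y = x [^] k" unfolding P0_def using gen_fin[OF fin x] by auto
    have "y [^] (p ^ a) = x [^] (k * ord x)" using k x ox by (simp add: nat_pow_pow)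
    also have "\<dots> = \<one>" using pow_ord_mult2[OF x] .
    finally show "y \<in> S" unfolding S_def using k x by simp
  qed
  have P0O: "P0 \<inter> Ot = {z \<in> generate G {x}. ord z = ord x}"
  proof -
    have "generate G {x} \<subseteq> carrier G" using subgroup.subset[OF gen_subgroup[OF x]] .
    thus ?thesis unfolding P0_def Ot_def using ox by auto
  qed
  have cP0O: "card (P0 \<inter> Ot) = phi' (p ^ a)" using P0O card_gen_ord[OF fin x] ox by simp
  have finP0: "finite P0" using finite_subset[OF P0S finS] .
  have finO: "finite Ot" using finite_subset[OF OS finS] .
  have "card (Ot \<union> P0) = card Ot + card P0 - card (Ot \<inter> P0)"
    using card_Un_Int[OF finO finP0] by simp
  hence cU: "card (Ot \<union> P0) = card C * (u * (p - 1)) + p * u - u * (p - 1)"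
    using cO cP0 cP0O phi pa by (simp add: Int_commute)
  have "card (Ot \<union> P0) \<le> card S" using OS P0S finS by (intro card_mono) auto
  hence ineq: "card C * (u * (p - 1)) + p * u - u * (p - 1) < p * (p * u)"
    using cU bound pa unfolding S_def by simp
  have "C \<noteq> {}" using P0C by blast
  hence "card C \<noteq> 0" using finC by simp
  then obtain c' where cC: "card C = Suc c'" using not0_implies_Suc by blast
  have w: "u * (p - 1) \<le> p * u" by simp
  have "card C * (u * (p - 1)) + p * u - u * (p - 1) = c' * (u * (p - 1)) + p * u"
    using cC w by simp
  hence "c' * (u * (p - 1)) + p * u < p * (p * u)" using ineq by simp
  moreover have "p * (p * u) = p * (u * (p - 1)) + p * u"
  proof -
    have "p * (p * u) = p * (u * ((p - 1) + 1))" using p2 by simp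
    also have "\<dots> = p * (u * (p - 1)) + p * u" by (simp add: algebra_simps)
    finally show ?thesis .
  qed
  ultimately have "c' * (u * (p - 1)) < p * (u * (p - 1))" by simp
  hence lt: "c' < p" by (simp add: mult_less_cancel2)
  have "p dvd card C - 1" unfolding C_def using card_C_mod[OF fin p ordG pm x ox] .
  hence "p dvd c'" using cC by simp
  hence "c' = 0" using lt by (auto dest: dvd_imp_le)
  hence "card C = 1" using cC by simp
  hence Ceq: "C = {P0}" using P0C by (metis card_1_singletonE singletonD)
  fix y assume y: "y \<in> carrier G" and yp: "y [^] (p ^ a) = \<one>"
  have "y <# P0 #> inv y = generate G {y \<otimes> x \<otimes> inv y}"
    unfolding P0_def using conj_gen[OF fin y x] .
  moreover have "generate G {y \<otimes> x \<otimes> inv y} \<in> C"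
    unfolding C_def using ord_conj[OF y x] ox y x by (intro CollectI exI[of _ "y \<otimes> x \<otimes> inv y"]) simp
  ultimately have "y <# P0 #> inv y = P0" using Ceq by simp
  thus "y \<in> generate G {x}"
    using normalizing_pelem_in[OF fin p P0s cP0 ordG pm y yp] unfolding P0_def by simp
qed

end

context group begin

lemma pp_count:
  assumes fin: "finite (carrier G)" and p: "Factorial_Ring.prime (p::nat)"
    and x: "x \<in> carrier G" and ox: "ord x = p ^ a"
    and hprop: "\<And>y. y \<in> carrier G \<Longrightarrow> y [^] (p ^ a) = \<one> \<Longrightarrow> y \<in> generate G {x}"
    and ka: "k \<le> a"
  shows "card {y\<in>carrier G. ord y = p ^ k} \<le> phi' (p ^ k)"
proof (cases "\<exists>b\<in>carrier G. ord b = p ^ k")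
  case False
  hence e: "{y\<in>carrier G. ord y = p ^ k} = {}" by blast
  show ?thesis unfolding e by simp
next
  case True
  then obtain b where b: "b \<in> carrier G" "ord b = p ^ k" by blast
  have pk: "p ^ k dvd p ^ a" using ka by (rule le_imp_power_dvd)
  then obtain r where r: "p ^ a = p ^ k * r" by blast
  have sub: "{y\<in>carrier G. y [^] ord b = \<one>} \<subseteq> {y \<in> generate G {x}. y [^] (p ^ k) = \<one>}"
  proof
    fix y assume "y \<in> {y\<in>carrier G. y [^] ord b = \<one>}"
    hence y: "y \<in> carrier G" "y [^] (p ^ k) = \<one>" using b by auto
    have "y [^] (p ^ a) = (y [^] (p ^ k)) [^] r" using r y(1) by (simp add: nat_pow_pow)
    also have "\<dots> = \<one>" using y(2) by simp
    finally have "y \<in> generate G {x}" using hprop y(1) by blast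
    thus "y \<in> {y \<in> generate G {x}. y [^] (p ^ k) = \<one>}" using y by simp
  qed
  have "card {y \<in> generate G {x}. y [^] (p ^ k) = \<one>} \<le> p ^ k"
    using card_gen_sol[OF fin x] pk ox by simp
  moreover have finX: "finite {y \<in> generate G {x}. y [^] (p ^ k) = \<one>}"
  proof -
    have "{y \<in> generate G {x}. y [^] (p ^ k) = \<one>} \<subseteq> carrier G"
      using subgroup.subset[OF gen_subgroup[OF x]] by blast
    thus ?thesis using fin by (rule finite_subset)
  qed
  ultimately have "card {y\<in>carrier G. y [^] ord b = \<one>} \<le> ord b"
    using card_mono[OF finX sub] b(2) by linarith
  thus ?thesis using card_ord_eq_phi[OF fin b(1)] b(2) by simp
qed

lemma counts_all:
  assumes fin: "finite (carrier G)"
    and PP: "\<And>p k. Factorial_Ring.prime (p::nat) \<Longrightarrow> p ^ k dvd order G \<Longrightarrow>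
               card {y\<in>carrier G. ord y = p ^ k} \<le> phi' (p ^ k)"
  shows "d dvd order G \<Longrightarrow> card {y\<in>carrier G. ord y = d} \<le> phi' d"
proof (induction d rule: less_induct)
  case (less d)
  have opos: "order G > 0" using fin order_gt_0_iff_finite by blast
  have d0: "d \<noteq> 0" using less.prems opos by auto
  show ?case
  proof (cases "d = 1")
    case True
    have "Factorial_Ring.prime (2::nat)" by simp
    thus ?thesis using PP[of 2 0] True by simp
  next
    case False
    then obtain p :: nat where p: "Factorial_Ring.prime p" "p dvd d" using prime_factor_nat by blast
    have np: "\<not> is_unit p" using prime_gt_1_nat[OF p(1)] by simp
    define k where "k = multiplicity p d"
    define m' where "m' = d div p ^ k"
    have dk: "p ^ k dvd d" unfolding k_def by (rule multiplicity_dvd)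
    have dm: "d = p ^ k * m'" unfolding m'_def using dk by simp
    have pm: "\<not> p dvd m'" unfolding m'_def k_def by (rule multiplicity_decompose[OF d0 np])
    have kpos: "k > 0" unfolding k_def using multiplicity_gt_zero_iff[OF d0 np] p(2) by simp
    have p2: "p \<ge> 2" using prime_ge_2_nat[OF p(1)] .
    have pk2: "p ^ k \<ge> 2"
    proof -
      have "p ^ 1 \<le> p ^ k" using kpos p2 by (intro power_increasing) auto
      thus ?thesis using p2 by simp
    qed
    have m0: "m' \<noteq> 0" using dm d0 by auto
    show ?thesis
    proof (cases "m' = 1")
      case True
      hence "d = p ^ k" using dm by simp
      thus ?thesis using PP[OF p(1)] less.prems by simp
    next
      case False
      have m2: "m' \<ge> 2" using False m0 by simp
      have "1 * m' < p ^ k * m'" using pk2 m0 by (intro mult_strict_right_mono) auto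
      hence lt1: "m' < d" using dm by simp
      have "p ^ k * 1 < p ^ k * m'" using m2 pk2 p2 by (intro mult_strict_left_mono) simp_all
      hence lt2: "p ^ k < d" using dm by simp
      have cop: "coprime (p ^ k) m'" using prime_imp_coprime[OF p(1) pm] by simp
      have dv1: "p ^ k dvd order G" using dk less.prems by (rule dvd_trans)
      have dv2: "m' dvd order G" using dm less.prems by (metis dvd_mult_right)
      have "card {y\<in>carrier G. ord y = d}
          \<le> card {y\<in>carrier G. ord y = p ^ k} * card {y\<in>carrier G. ord y = m'}"
        using card_ord_mult[OF fin cop] m0 p2 dm by simp
      also have "\<dots> \<le> phi' (p ^ k) * phi' m'"
        using less.IH[OF lt2 dv1] less.IH[OF lt1 dv2] by (rule mult_le_mono)
      also have "\<dots> = phi' d" using dm cop by (simp add: phi'_totient totient_mult_coprime)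
      finally show ?thesis .
    qed
  qed
qed

end

context group begin

lemma exp_facts:
  assumes fin: "finite (carrier G)"
  shows "\<And>y. y \<in> carrier G \<Longrightarrow> ord y dvd group_exp G" and "group_exp G \<noteq> 0"
proof -
  show "\<And>y. y \<in> carrier G \<Longrightarrow> ord y dvd group_exp G"
    unfolding group_exp_def by (rule dvd_Lcm) simp
  have "0 \<notin> ord ` carrier G" using ord_pos_fin[OF fin] by fastforce
  thus "group_exp G \<noteq> 0" unfolding group_exp_def using Lcm_0_iff[of "ord ` carrier G"] fin by simp
qed

lemma exists_x:
  assumes fin: "finite (carrier G)" and p: "Factorial_Ring.prime (p::nat)"
    and ordG: "order G = p ^ a * m" and pm: "\<not> p dvd m" and apos: "a > 0"
    and fq: "\<And>n. n \<in> pp_divisors G \<Longrightarrow> frob_quot G n < p"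
  shows "\<exists>x\<in>carrier G. ord x = p ^ a \<and> (\<forall>y\<in>carrier G. y [^] (p ^ a) = \<one> \<longrightarrow> y \<in> generate G {x})"
proof -
  obtain P where P: "subgroup P G" "card P = p ^ a"
    using sylow_thm[OF p is_group ordG fin] by blast
  define E where "E = group_exp G"
  have ordE: "\<And>y. y \<in> carrier G \<Longrightarrow> ord y dvd E" unfolding E_def using exp_facts(1)[OF fin] .
  have E0: "E \<noteq> 0" unfolding E_def using exp_facts(2)[OF fin] .
  define n where "n = gcd (p ^ a) E"
  have "n dvd p ^ a" unfolding n_def by simp
  then obtain j where j: "j \<le> a" "n = p ^ j" using divides_primepow_nat[OF p] by blast
  have nE: "n dvd E" unfolding n_def by simp
  have npp: "n \<in> pp_divisors G" unfolding pp_divisors_def using nE j p unfolding E_def by blast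
  have Psol: "P \<subseteq> sol_set G n"
  proof
    fix y assume yP: "y \<in> P"
    have y: "y \<in> carrier G" using yP P(1) subgroup.subset by blast
    have gP: "group (G\<lparr>carrier := P\<rparr>)" using subgroup_imp_group[OF P(1)] .
    have "y [^]\<^bsub>G\<lparr>carrier := P\<rparr>\<^esub> order (G\<lparr>carrier := P\<rparr>) = \<one>\<^bsub>G\<lparr>carrier := P\<rparr>\<^esub>"
      using group.pow_order_eq_1[OF gP] yP by simp
    hence "y [^] (p ^ a) = \<one>" using P(2) nat_pow_consistent[of y _ P] unfolding order_def by simp
    hence "ord y dvd p ^ a" using pow_eq_id[OF y] by simp
    hence "ord y dvd n" unfolding n_def using ordE[OF y] by simp
    hence "y [^] n = \<one>" using pow_eq_id[OF y] by simp
    thus "y \<in> sol_set G n" unfolding sol_set_def using y by simp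
  qed
  have finS: "finite (sol_set G n)" unfolding sol_set_def using fin by simp
  have "p ^ a \<le> card (sol_set G n)" using card_mono[OF finS Psol] P(2) by simp
  hence "p ^ a div p ^ j \<le> frob_quot G n" unfolding frob_quot_def using j(2) by (simp add: div_le_mono)
  moreover have "p ^ a div p ^ j = p ^ (a - j)" using j(1) p prime_gt_0_nat by (simp add: power_diff)
  ultimately have "p ^ (a - j) < p" using fq[OF npp] by simp
  hence "a - j = 0" using prime_gt_1_nat[OF p]
    by (metis less_not_refl2 nat_less_le not_less power_increasing power_one_right not_gr_zero
        Suc_leI One_nat_def zero_less_diff)
  hence "j = a" using j(1) by simp
  hence paE: "p ^ a dvd group_exp G" using nE j(2) unfolding E_def by simp
  have "0 \<notin> ord ` carrier G" using ord_pos_fin[OF fin] by fastforce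
  then obtain z where z: "z \<in> ord ` carrier G" "p ^ a dvd z"
    using pp_dvd_Lcm[OF _ p apos] paE fin unfolding group_exp_def by blast
  then obtain g where g: "g \<in> carrier G" "p ^ a dvd ord g" by blast
  then obtain r where r: "ord g = p ^ a * r" by blast
  have r0: "r \<noteq> 0" using r ord_pos_fin[OF fin g(1)] by auto
  define x where "x = g [^] r"
  have x: "x \<in> carrier G" unfolding x_def using g by simp
  have ox: "ord x = p ^ a" unfolding x_def using ord_pow[OF g(1), of r] r r0 by simp
  have "p ^ a \<in> pp_divisors G" unfolding pp_divisors_def using paE p by blast
  hence "card (sol_set G (p ^ a)) div p ^ a < p" using fq unfolding frob_quot_def by blast
  hence "card (sol_set G (p ^ a)) < p * p ^ a"
    using div_less_iff_less_mult[of "p ^ a"] prime_gt_0_nat[OF p] by simp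
  hence bound: "card {y\<in>carrier G. y [^] (p ^ a) = \<one>} < p * p ^ a" unfolding sol_set_def .
  show ?thesis using core[OF fin p ordG pm apos x ox bound] x ox by blast
qed

end

theorem corollary1p3:
  fixes G :: "('a, 'b) monoid_scheme" and q :: nat
  assumes "group G" and "finite (carrier G)" and "order G > 1"
    and "q = Min {p. Factorial_Ring.prime (p::nat) \<and> p dvd order G}"
    and "mf_pp G < q"
  shows "cyclic_group G"
proof -
  interpret group G by fact
  have fin: "finite (carrier G)" by fact
  have opos: "order G > 0" using assms(3) by simp
  have E0: "group_exp G \<noteq> 0" using exp_facts(2)[OF fin] .
  have finPP: "finite (pp_divisors G)"
  proof -
    have "pp_divisors G \<subseteq> {n. n dvd group_exp G}" unfolding pp_divisors_def by blast
    moreover have "finite {n. n dvd group_exp G}" using E0 by simp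
    ultimately show ?thesis by (rule finite_subset)
  qed
  have fq: "\<And>n. n \<in> pp_divisors G \<Longrightarrow> frob_quot G n < q"
  proof -
    fix n assume n: "n \<in> pp_divisors G"
    have "finite (F_pp G)" unfolding F_pp_def using finPP by simp
    moreover have "frob_quot G n \<in> F_pp G" unfolding F_pp_def using n by simp
    ultimately have "frob_quot G n \<le> mf_pp G" unfolding mf_pp_def by (rule Max_ge)
    thus "frob_quot G n < q" using assms(5) by simp
  qed
  have qp: "\<And>p. Factorial_Ring.prime (p::nat) \<Longrightarrow> p dvd order G \<Longrightarrow> q \<le> p"
  proof -
    fix p :: nat assume p: "Factorial_Ring.prime p" "p dvd order G"
    have "{p. Factorial_Ring.prime (p::nat) \<and> p dvd order G} \<subseteq> {..order G}"
      using opos by (auto intro: dvd_imp_le)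
    hence "finite {p. Factorial_Ring.prime (p::nat) \<and> p dvd order G}" by (rule finite_subset) simp
    thus "q \<le> p" unfolding assms(4) using p by (intro Min_le) auto
  qed
  have PP: "\<And>p k. Factorial_Ring.prime (p::nat) \<Longrightarrow> p ^ k dvd order G \<Longrightarrow>
               card {y\<in>carrier G. ord y = p ^ k} \<le> phi' (p ^ k)"
  proof -
    fix p k assume p: "Factorial_Ring.prime (p::nat)" and pk: "p ^ k dvd order G"
    show "card {y\<in>carrier G. ord y = p ^ k} \<le> phi' (p ^ k)"
    proof (cases "k = 0")
      case True
      have "{y\<in>carrier G. ord y = 1} = {\<one>\<^bsub>G\<^esub>}" using ord_eq_1 by auto
      moreover have "phi' 1 = 1" by (simp add: phi'_totient)
      ultimately show ?thesis using True by simp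
    next
      case False
      have np: "\<not> is_unit p" using prime_gt_1_nat[OF p] by simp
      have o0: "order G \<noteq> 0" using opos by simp
      define a where "a = multiplicity p (order G)"
      define m where "m = order G div p ^ a"
      have ordG: "order G = p ^ a * m" unfolding m_def a_def
        using dvd_mult_div_cancel[OF multiplicity_dvd[of p "order G"]] by simp
      have pm: "\<not> p dvd m" unfolding m_def a_def by (rule multiplicity_decompose[OF o0 np])
      have ka: "k \<le> a" unfolding a_def using power_dvd_iff_le_multiplicity[OF o0 np] pk by simp
      have apos: "a > 0" using ka False by simp
      have pdvd: "p dvd order G" using pk False by (meson dvd_power dvd_trans not_gr_zero)
      have fq': "\<And>n. n \<in> pp_divisors G \<Longrightarrow> frob_quot G n < p"
        using fq qp[OF p pdvd] by (meson less_le_trans)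
      obtain x where x: "x \<in> carrier G" "ord x = p ^ a"
        and hx: "\<forall>y\<in>carrier G. y [^]\<^bsub>G\<^esub> (p ^ a) = \<one>\<^bsub>G\<^esub> \<longrightarrow> y \<in> generate G {x}"
        using exists_x[OF fin p ordG pm apos fq'] by blast
      show ?thesis using pp_count[OF fin p x(1) x(2) _ ka] hx by blast
    qed
  qed
  show ?thesis using cyclic_from_counts[OF fin] counts_all[OF fin PP] by blast
qed

end
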